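(* Let $n,m\ge 1$, let $A=(a_1,\ldots,a_m)$ be a real $n\times m$ matrix with $a_i\neq 0$ for all $i$, and let $b=(b_1,\ldots,b_m)^\top\in\mathbb{R}^m$ be such that $K=\{x\in\mathbb{R}^n \mid A^\top x\le b\}$ is nonempty. Let $H_i^c=\{x\in\mathbb{R}^n\mid a_i^\top x>b_i\}$ for $i=1,\ldots,m$. For $\varepsilon>0$ put $b_i(\varepsilon)=b_i+\varepsilon^i$, $H_i(\varepsilon)=\{x\mid a_i^\top x\le b_i(\varepsilon)\}$, $\partial H_i(\varepsilon)=\{x\mid a_i^\top x= b_i(\varepsilon)\}$, $K(\varepsilon)=\bigcap_{i=1}^m H_i(\varepsilon)$, $F_i(\varepsilon)=\partial H_i(\varepsilon)\cap K(\varepsilon)$, and $\mathcal{F}(\varepsilon)=\{J\subseteq\{1,\ldots,m\}\mid J\neq\emptyset,\ \bigcap_{i\in J}F_i(\varepsilon)\neq\emptyset\}$, and let $\mathcal{F}(0+)$ denote the common value of $\mathcal{F}(\varepsilon)$ for all sufficiently small $\varepsilon>0$ (which is known to exist). Then for all $x\in\mathbb{R}^n$, \[ \mathbf{1}_{\bigcup_{i=1}^m H_i^c}(x)=\sum_{J\in\mathcal{F}(0+)}(-1)^{|J|-1}\,\mathbf{1}_{\bigcap_{i\in J}H_i^c}(x), \] where $\mathbf{1}_S$ denotes the indicator function of $S$ and $|J|$ the cardinality of $J$. *)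

theory Defs
  imports "HOL-Analysis.Analysis"
begin

text \<open>The columns a_1..a_m of the n x m matrix A are given as a function
  a :: nat => real^'n (only indices 1..m matter), and b :: nat => real.\<close>

definition Hc :: "(nat \<Rightarrow> real^'n) \<Rightarrow> (nat \<Rightarrow> real) \<Rightarrow> nat \<Rightarrow> (real^'n) set" where
  "Hc a b i = {x. a i \<bullet> x > b i}"

definition beps :: "(nat \<Rightarrow> real) \<Rightarrow> real \<Rightarrow> nat \<Rightarrow> real" where
  "beps b \<epsilon> i = b i + \<epsilon> ^ i"

definition Heps :: "(nat \<Rightarrow> real^'n) \<Rightarrow> (nat \<Rightarrow> real) \<Rightarrow> real \<Rightarrow> nat \<Rightarrow> (real^'n) set" where
  "Heps a b \<epsilon> i = {x. a i \<bullet> x \<le> beps b \<epsilon> i}"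

definition bdHeps :: "(nat \<Rightarrow> real^'n) \<Rightarrow> (nat \<Rightarrow> real) \<Rightarrow> real \<Rightarrow> nat \<Rightarrow> (real^'n) set" where
  "bdHeps a b \<epsilon> i = {x. a i \<bullet> x = beps b \<epsilon> i}"

definition Keps :: "(nat \<Rightarrow> real^'n) \<Rightarrow> (nat \<Rightarrow> real) \<Rightarrow> nat \<Rightarrow> real \<Rightarrow> (real^'n) set" where
  "Keps a b m \<epsilon> = (\<Inter>i\<in>{1..m}. Heps a b \<epsilon> i)"

definition Feps :: "(nat \<Rightarrow> real^'n) \<Rightarrow> (nat \<Rightarrow> real) \<Rightarrow> nat \<Rightarrow> real \<Rightarrow> nat \<Rightarrow> (real^'n) set" where
  "Feps a b m \<epsilon> i = bdHeps a b \<epsilon> i \<inter> Keps a b m \<epsilon>"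

definition famF :: "(nat \<Rightarrow> real^'n) \<Rightarrow> (nat \<Rightarrow> real) \<Rightarrow> nat \<Rightarrow> real \<Rightarrow> nat set set" where
  "famF a b m \<epsilon> = {J. J \<subseteq> {1..m} \<and> J \<noteq> {} \<and> (\<Inter>i\<in>J. Feps a b m \<epsilon> i) \<noteq> {}}"

definition famF0 :: "(nat \<Rightarrow> real^'n) \<Rightarrow> (nat \<Rightarrow> real) \<Rightarrow> nat \<Rightarrow> nat set set" where
  "famF0 a b m = (THE \<F>. \<forall>\<^sub>F \<epsilon> in at_right 0. famF a b m \<epsilon> = \<F>)"

end

theory Submission
  imports Defs "HOL-Computational_Algebra.Polynomial"
begin


definition gT :: "(nat set \<Rightarrow> bool) \<Rightarrow> nat set \<Rightarrow> real" where
  "gT f J = (if J \<noteq> {} \<and> f J then (-1::real) ^ (card J - 1) else 0)"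

definition sumF :: "(nat set \<Rightarrow> bool) \<Rightarrow> nat set \<Rightarrow> real" where
  "sumF f X = (\<Sum>J\<in>Pow X. gT f J)"

lemma sumF_empty: "sumF f {} = 0"
  by (simp add: sumF_def gT_def)

lemma sumF_insert:
  assumes "finite X" "j \<notin> X"
  shows "sumF f (insert j X) = sumF f X + (if f {j} then 1 else 0) - sumF (\<lambda>J. f (insert j J)) X"
proof -
  have fin: "finite (Pow X)" using assms by simp
  have disj: "Pow X \<inter> insert j ` Pow X = {}" using assms by auto
  have inj: "inj_on (insert j) (Pow X)" using assms
    unfolding inj_on_def by (metis PowD insert_absorb insert_ident subsetD)
  have "sumF f (insert j X) = (\<Sum>J\<in>Pow X. gT f J) + (\<Sum>J\<in>insert j ` Pow X. gT f J)"
    unfolding sumF_def Pow_insert using fin disj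
    by (simp add: sum.union_disjoint)
  also have "(\<Sum>J\<in>insert j ` Pow X. gT f J) = (\<Sum>J\<in>Pow X. gT f (insert j J))"
    using inj by (simp add: sum.reindex)
  also have "\<dots> = (\<Sum>J\<in>Pow X. (if J = {} then (if f {j} then 1 else 0) else 0) - gT (\<lambda>J. f (insert j J)) J)"
  proof (rule sum.cong[OF refl])
    fix J assume J: "J \<in> Pow X"
    then have fJ: "finite J" using assms finite_subset by auto
    have jJ: "j \<notin> J" using J assms by auto
    show "gT f (insert j J) = (if J = {} then (if f {j} then 1 else 0) else 0) - gT (\<lambda>J. f (insert j J)) J"
    proof (cases "J = {}")
      case True then show ?thesis by (simp add: gT_def)
    next
      case False
      then have "card J \<ge> 1" using fJ by (simp add: Suc_le_eq card_gt_0_iff)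
      then have "(-1::real) ^ card J = - ((-1) ^ (card J - 1))"
        by (metis Suc_diff_le diff_Suc_1 mult_minus1 power_Suc)
      then show ?thesis using False fJ jJ by (simp add: gT_def)
    qed
  qed
  also have "\<dots> = (if f {j} then 1 else 0) - sumF (\<lambda>J. f (insert j J)) X"
    unfolding sumF_def using sum.delta[OF fin, of "{}" "\<lambda>_. 1::real"] by (simp add: sum_subtractf fin)
  finally show ?thesis unfolding sumF_def by simp
qed

lemma sumF_cancel:
  assumes "finite X" "k \<in> X" "f {k}" "\<And>J. J \<subseteq> X \<Longrightarrow> f (insert k J) = f J"
  shows "sumF f X = 1"
proof -
  have "sumF f X = sumF f (insert k (X - {k}))" using assms by (simp add: insert_absorb)
  also have "\<dots> = sumF f (X - {k}) + 1 - sumF (\<lambda>J. f (insert k J)) (X - {k})"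
    using assms by (subst sumF_insert) auto
  also have "sumF (\<lambda>J. f (insert k J)) (X - {k}) = sumF f (X - {k})"
    unfolding sumF_def gT_def using assms(4) by (intro sum.cong) auto
  finally show ?thesis by simp
qed

lemma sumF_zero:
  assumes "\<And>J. J \<subseteq> X \<Longrightarrow> \<not> f J"
  shows "sumF f X = 0"
  unfolding sumF_def gT_def using assms by (intro sum.neutral) auto



definition PE :: "(nat \<Rightarrow> real^'n) \<Rightarrow> (nat \<Rightarrow> real) \<Rightarrow> nat set \<Rightarrow> nat set \<Rightarrow> (real^'n) set" where
  "PE a c M E = {y. (\<forall>i\<in>M. a i \<bullet> y \<le> c i) \<and> (\<forall>e\<in>E. a e \<bullet> y = c e)}"

lemma PE_mono: "E \<subseteq> E' \<Longrightarrow> PE a c M E' \<subseteq> PE a c M E"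
  unfolding PE_def by auto

lemma PE_mid:
  assumes "p \<in> PE a c M E" "z \<in> PE a c M E"
  shows "(1/2) *\<^sub>R (p + z) \<in> PE a c M E"
  using assms unfolding PE_def by (auto simp: inner_add_right intro: add_mono[of _ "c _" _ "c _", simplified mult_2_right[symmetric]] ) (smt (verit))

lemma special_point_aux:
  assumes "finite N" "N \<subseteq> M" "p0 \<in> PE a c M E"
  shows "\<exists>p\<in>PE a c M E. \<forall>i\<in>N. (\<forall>z\<in>PE a c M E. a i \<bullet> z = c i) \<or> a i \<bullet> p < c i"
  using assms(1,2)
proof (induction N rule: finite_induct)
  case empty then show ?case using assms(3) by blast
next
  case (insert k N)
  then obtain p where p: "p \<in> PE a c M E"
      "\<forall>i\<in>N. (\<forall>z\<in>PE a c M E. a i \<bullet> z = c i) \<or> a i \<bullet> p < c i" by blast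
  show ?case
  proof (cases "\<forall>z\<in>PE a c M E. a k \<bullet> z = c k")
    case True then show ?thesis using p by blast
  next
    case False
    then obtain z where z: "z \<in> PE a c M E" "a k \<bullet> z \<noteq> c k" by blast
    show ?thesis
    proof (intro bexI[of _ "(1/2) *\<^sub>R (p + z)"] ballI)
      show "(1/2) *\<^sub>R (p + z) \<in> PE a c M E" using PE_mid p z by blast
      fix i assume i: "i \<in> insert k N"
      then have iM: "i \<in> M" using insert.prems by auto
      show "(\<forall>z\<in>PE a c M E. a i \<bullet> z = c i) \<or> a i \<bullet> ((1/2) *\<^sub>R (p + z)) < c i"
      proof (cases "\<forall>z\<in>PE a c M E. a i \<bullet> z = c i")
        case True then show ?thesis by blast
      next
        case F2: False
        have pz: "a i \<bullet> p \<le> c i" "a i \<bullet> z \<le> c i" using p(1) z(1) iM unfolding PE_def by auto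
        have "a i \<bullet> p < c i \<or> a i \<bullet> z < c i"
        proof (cases "i = k")
          case True then show ?thesis using z pz by auto
        next
          case False then have "i \<in> N" using i by auto
          then show ?thesis using p(2) F2 by auto
        qed
        then show ?thesis using pz by (auto simp: inner_add_right)
      qed
    qed
  qed
qed

lemma special_point:
  assumes "finite M" "PE a c M E \<noteq> {}"
  obtains p where "p \<in> PE a c M E" "\<And>i. i \<in> M \<Longrightarrow> (\<forall>z\<in>PE a c M E. a i \<bullet> z = c i) \<or> a i \<bullet> p < c i"
  using special_point_aux[OF assms(1) subset_refl] assms(2) by blast



lemma seg_inner:
  fixes p x :: "real^'n"
  shows "q \<bullet> ((1 - s) *\<^sub>R p + s *\<^sub>R x) = q \<bullet> p + s * (q \<bullet> x - q \<bullet> p)"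
  by (simp add: inner_add_right algebra_simps)

lemma G_main:
  fixes a :: "nat \<Rightarrow> real^'n" and c :: "nat \<Rightarrow> real"
  assumes finM: "finite M"
  shows "card (M - E) = n \<Longrightarrow> E \<subseteq> M \<Longrightarrow> PE a c M E \<noteq> {} \<Longrightarrow> (\<forall>e\<in>E. a e \<bullet> x = c e) \<Longrightarrow>
     T \<subseteq> {i\<in>M. a i \<bullet> x = c i} \<Longrightarrow> {i\<in>M. a i \<bullet> x > c i} \<union> T \<noteq> {} \<Longrightarrow>
     sumF (\<lambda>J. PE a c M (E \<union> J) \<noteq> {}) ({i\<in>M. a i \<bullet> x > c i} \<union> T) = 1"
proof (induction n arbitrary: E x T rule: less_induct)
  case (less n E x T)
  note IHo = less.IH
  note Po = less.prems
  define X where "X = {i\<in>M. a i \<bullet> x > c i} \<union> T"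
  define f where "f = (\<lambda>J. PE a c M (E \<union> J) \<noteq> {})"
  have XM: "X \<subseteq> M" using less.prems unfolding X_def by auto
  have finX: "finite X" using XM finM finite_subset by blast
  obtain p where p: "p \<in> PE a c M E"
      "\<And>i. i \<in> M \<Longrightarrow> (\<forall>z\<in>PE a c M E. a i \<bullet> z = c i) \<or> a i \<bullet> p < c i"
    using special_point[OF finM less.prems(3)] by blast
  show ?case
  proof (cases "\<exists>k\<in>X. \<forall>z\<in>PE a c M E. a k \<bullet> z = c k")
    case True
    then obtain k where k: "k \<in> X" "\<forall>z\<in>PE a c M E. a k \<bullet> z = c k" by blast
    have "sumF f X = 1"
    proof (rule sumF_cancel[OF finX k(1)])
      have "PE a c M (E \<union> {k}) = PE a c M E" using k(2) unfolding PE_def by auto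
      then show "f {k}" using less.prems(3) unfolding f_def by simp
      fix J
      have "PE a c M (E \<union> insert k J) = PE a c M (E \<union> J)"
        using k(2) PE_mono[of E "E \<union> J" a c M] unfolding PE_def by auto
      then show "f (insert k J) = f J" unfolding f_def by simp
    qed
    then show ?thesis unfolding X_def f_def .
  next
    case False
    have strict: "\<And>k. k \<in> X \<Longrightarrow> a k \<bullet> p < c k" using p(2) False XM by blast
    have XE: "X \<inter> E = {}"
    proof -
      { fix e assume "e \<in> X" "e \<in> E"
        then have "\<forall>z\<in>PE a c M E. a e \<bullet> z = c e" unfolding PE_def by auto
        with False \<open>e \<in> X\<close> have False by blast }
      then show ?thesis by blast
    qed
    have xge: "\<And>k. k \<in> X \<Longrightarrow> a k \<bullet> x \<ge> c k" using less.prems(5) unfolding X_def by auto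
    define d where "d k = a k \<bullet> x - a k \<bullet> p" for k
    define t where "t k = (c k - a k \<bullet> p) / d k" for k
    define y where "y (s::real) = (1 - s) *\<^sub>R p + s *\<^sub>R x" for s
    have dpos: "\<And>k. k \<in> X \<Longrightarrow> d k > 0" using strict xge unfolding d_def by fastforce
    have key: "\<And>k (s::real). k \<in> X \<Longrightarrow> a k \<bullet> y s - c k = d k * (s - t k)"
    proof -
      fix k and s :: real assume k: "k \<in> X"
      have "d k * t k = c k - a k \<bullet> p" using dpos[OF k] unfolding t_def by simp
      then show "a k \<bullet> y s - c k = d k * (s - t k)"
        unfolding y_def seg_inner d_def by (simp add: algebra_simps)
    qed
    have tpos: "\<And>k. k \<in> X \<Longrightarrow> t k > 0" using strict dpos unfolding t_def by simp
    have tle1: "\<And>k. k \<in> X \<Longrightarrow> t k \<le> 1" using xge dpos unfolding t_def d_def by (simp add: divide_le_eq)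
    have outX: "\<And>i (s::real). i \<in> M \<Longrightarrow> i \<notin> X \<Longrightarrow> 0 \<le> s \<Longrightarrow> s \<le> 1 \<Longrightarrow> a i \<bullet> y s \<le> c i"
    proof -
      fix i and s :: real assume i: "i \<in> M" "i \<notin> X" and s: "0 \<le> s" "s \<le> 1"
      have "a i \<bullet> x \<le> c i" using i unfolding X_def by auto
      moreover have "a i \<bullet> p \<le> c i" using p(1) i unfolding PE_def by auto
      ultimately have "(1 - s) * (a i \<bullet> p) + s * (a i \<bullet> x) \<le> (1 - s) * c i + s * c i"
        using s by (intro add_mono mult_left_mono) auto
      then show "a i \<bullet> y s \<le> c i" unfolding y_def seg_inner by (simp add: algebra_simps)
    qed
    have Eeq: "\<And>e (s::real). e \<in> E \<Longrightarrow> a e \<bullet> y s = c e"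
      using p(1) less.prems(4) unfolding PE_def y_def seg_inner by auto
    have Q: "\<And>I. card I = k' \<Longrightarrow> I \<subseteq> X \<Longrightarrow> I \<noteq> {} \<Longrightarrow> (\<forall>i\<in>I. \<forall>k\<in>X. t k < t i \<longrightarrow> k \<in> I) \<Longrightarrow> sumF f I = 1" for k'
    proof (induction k' rule: less_induct)
      case (less k' I)
      have finI: "finite I" using less.prems(2) finX finite_subset by blast
      obtain j where j: "j \<in> I" "\<And>i. i \<in> I \<Longrightarrow> t i \<le> t j"
        using Max_in[of "t ` I"] Max_ge[of "t ` I"] finI less.prems(3) by fastforce
      have jX: "j \<in> X" using j less.prems(2) by auto
      define I' where "I' = I - {j}"
      have I_eq: "I = insert j I'" "j \<notin> I'" using j unfolding I'_def by auto
      have finI': "finite I'" using finI unfolding I'_def by simp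
      define yj where "yj = y (t j)"
      have tj01: "0 \<le> t j" "t j \<le> 1" using tpos[OF jX] tle1[OF jX] by auto
      have yjj: "a j \<bullet> yj = c j" using key[OF jX, of "t j"] unfolding yj_def by simp
      have viol: "\<And>i. i \<in> M \<Longrightarrow> a i \<bullet> yj > c i \<Longrightarrow> i \<in> X \<and> t i < t j"
      proof -
        fix i assume i: "i \<in> M" "a i \<bullet> yj > c i"
        have "i \<in> X" using outX[OF i(1) _ tj01] i(2) unfolding yj_def by force
        moreover have "d i * (t j - t i) > 0" using key[OF \<open>i \<in> X\<close>, of "t j"] i(2) unfolding yj_def by simp
        then have "t i < t j" using dpos[OF \<open>i \<in> X\<close>] by (simp add: zero_less_mult_iff)
        ultimately show "i \<in> X \<and> t i < t j" by blast
      qed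
      show ?case
      proof (cases "I' = {}")
        case True
        have "yj \<in> PE a c M (E \<union> {j})"
        proof -
          { fix i assume i: "i \<in> M"
            have "a i \<bullet> yj \<le> c i"
            proof (rule ccontr)
              assume "\<not> ?thesis"
              then have "i \<in> X" "t i < t j" using viol[OF i] by auto
              then have "i \<in> I" using less.prems(4) j(1) by blast
              then show False using True \<open>t i < t j\<close> I_eq by auto
            qed }
          then show ?thesis using Eeq yjj unfolding PE_def yj_def by auto
        qed
        then have "f {j}" unfolding f_def by auto
        then show ?thesis using I_eq True sumF_insert[of "{}" j f] by (simp add: sumF_empty)
      next
        case False
        have IH1: "sumF f I' = 1"
        proof (rule less.IH[of "card I'"])
          show "card I' < k'" using less.prems(1) finI I_eq by simp
          show "I' \<subseteq> X" using less.prems(2) I_eq by auto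
          show "I' \<noteq> {}" by fact
          show "\<forall>i\<in>I'. \<forall>k\<in>X. t k < t i \<longrightarrow> k \<in> I'"
          proof (intro ballI impI)
            fix i k assume "i \<in> I'" "k \<in> X" "t k < t i"
            then have "k \<in> I" using less.prems(4) I_eq by auto
            moreover have "k \<noteq> j" using j(2)[of i] \<open>i \<in> I'\<close> \<open>t k < t i\<close> I_eq by auto
            ultimately show "k \<in> I'" using I_eq by auto
          qed
        qed simp
        have split: "sumF f I = sumF f I' + (if f {j} then 1 else 0) - sumF (\<lambda>J. f (insert j J)) I'"
          using I_eq finI' sumF_insert by simp
        show ?thesis
        proof (cases "f {j}")
          case False
          have "sumF (\<lambda>J. f (insert j J)) I' = 0"
          proof (rule sumF_zero)
            fix J
            have "PE a c M (E \<union> insert j J) \<subseteq> PE a c M (E \<union> {j})" by (rule PE_mono) auto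
            then show "\<not> f (insert j J)" using False unfolding f_def by auto
          qed
          then show ?thesis using split IH1 False by simp
        next
          case True
          define T' where "T' = I' - {i\<in>M. a i \<bullet> yj > c i}"
          have VT: "{i\<in>M. a i \<bullet> yj > c i} \<union> T' = I'"
          proof -
            have "{i\<in>M. a i \<bullet> yj > c i} \<subseteq> I'"
            proof
              fix i assume "i \<in> {i\<in>M. a i \<bullet> yj > c i}"
              then have "i \<in> X" "t i < t j" using viol by auto
              then show "i \<in> I'" using less.prems(4) j(1) I_eq by auto
            qed
            then show ?thesis unfolding T'_def by auto
          qed
          have IH2: "sumF (\<lambda>J. PE a c M (insert j E \<union> J) \<noteq> {}) ({i\<in>M. a i \<bullet> yj > c i} \<union> T') = 1"
          proof (rule IHo[of "card (M - insert j E)"])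
            have "j \<in> M - E" using jX XM XE by auto
            then have "M - insert j E \<subset> M - E" by auto
            then show "card (M - insert j E) < n" using Po(1) finM
              by (metis finite_Diff psubset_card_mono)
            show "insert j E \<subseteq> M" using jX XM Po(2) by auto
            show "PE a c M (insert j E) \<noteq> {}" using True unfolding f_def by simp
            show "\<forall>e\<in>insert j E. a e \<bullet> yj = c e" using yjj Eeq unfolding yj_def by auto
            show "T' \<subseteq> {i\<in>M. a i \<bullet> yj = c i}"
            proof
              fix i assume i: "i \<in> T'"
              then have iX: "i \<in> X" and iM: "i \<in> M" and nv: "\<not> a i \<bullet> yj > c i"
                using I_eq less.prems(2) XM unfolding T'_def by auto
              have "t i \<le> t j" using j(2) i I_eq unfolding T'_def by auto
              then have "a i \<bullet> yj - c i \<ge> 0" using key[OF iX, of "t j"] dpos[OF iX] unfolding yj_def by simp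
              then show "i \<in> {i\<in>M. a i \<bullet> yj = c i}" using nv iM by auto
            qed
            show "{i\<in>M. a i \<bullet> yj > c i} \<union> T' \<noteq> {}" using VT False by simp
          qed simp
          have "sumF (\<lambda>J. f (insert j J)) I' = 1"
            using IH2 unfolding VT f_def by simp
          then show ?thesis using split IH1 True by simp
        qed
      qed
    qed
    have "sumF f X = 1"
      using Q[OF refl, of X] "less.prems"(6) unfolding X_def by auto
    then show ?thesis unfolding X_def f_def .
  qed
qed



lemma minimal_face:
  fixes a :: "nat \<Rightarrow> real^'n"
  assumes finM: "finite M" and JM: "J \<subseteq> M" and ne: "PE a c M J \<noteq> {}"
  shows "\<exists>B. J \<subseteq> B \<and> B \<subseteq> M \<and> (\<exists>y. \<forall>i\<in>B. a i \<bullet> y = c i) \<and>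
           (\<forall>z. (\<forall>i\<in>B. a i \<bullet> z = c i) \<longrightarrow> (\<forall>k\<in>M. a k \<bullet> z \<le> c k))"
proof -
  define tight where "tight y = {i\<in>M. a i \<bullet> y = c i}" for y
  have tfin: "\<And>y. card (tight y) < Suc (card M)"
    unfolding tight_def using finM by (simp add: card_mono le_imp_less_Suc)
  obtain y0 where "y0 \<in> PE a c M J" using ne by blast
  then obtain y where y: "y \<in> PE a c M J" and ymax: "\<And>y'. y' \<in> PE a c M J \<Longrightarrow> card (tight y') \<le> card (tight y)"
    using ex_has_greatest_nat[of "\<lambda>y. y \<in> PE a c M J" y0 "\<lambda>y. card (tight y)" "Suc (card M)"] tfin by blast
  define B where "B = tight y"
  have JB: "J \<subseteq> B" using y JM unfolding B_def tight_def PE_def by auto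
  have BM: "B \<subseteq> M" unfolding B_def tight_def by auto
  have yB: "\<forall>i\<in>B. a i \<bullet> y = c i" unfolding B_def tight_def by auto
  have yle: "\<And>i. i \<in> M \<Longrightarrow> a i \<bullet> y \<le> c i" using y unfolding PE_def by auto
  have "\<forall>z. (\<forall>i\<in>B. a i \<bullet> z = c i) \<longrightarrow> (\<forall>k\<in>M. a k \<bullet> z \<le> c k)"
  proof (intro allI impI ballI, rule ccontr)
    fix z k assume zB: "\<forall>i\<in>B. a i \<bullet> z = c i" and kM: "k \<in> M" and nk: "\<not> a k \<bullet> z \<le> c k"
    define U where "U = {i\<in>M. a i \<bullet> z > a i \<bullet> y}"
    have kU: "k \<in> U" using nk yle[OF kM] kM unfolding U_def by auto
    have finU: "finite U" using finM unfolding U_def by simp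
    have Ustrict: "\<And>i. i \<in> U \<Longrightarrow> a i \<bullet> y < c i"
    proof -
      fix i assume i: "i \<in> U"
      then have "i \<notin> B" using zB yB unfolding U_def by auto
      then show "a i \<bullet> y < c i" using yle[of i] i unfolding U_def B_def tight_def by force
    qed
    define s where "s i = (c i - a i \<bullet> y) / (a i \<bullet> z - a i \<bullet> y)" for i
    obtain i0 where i0: "i0 \<in> U" "\<And>i. i \<in> U \<Longrightarrow> s i0 \<le> s i"
      using Min_in[of "s ` U"] Min_le[of "s ` U"] finU kU by fastforce
    have s0pos: "s i0 \<ge> 0" using Ustrict[OF i0(1)] i0(1) unfolding s_def U_def by simp
    define w where "w = y + s i0 *\<^sub>R (z - y)"
    have winner: "\<And>i. a i \<bullet> w = a i \<bullet> y + s i0 * (a i \<bullet> z - a i \<bullet> y)"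
      unfolding w_def by (simp add: inner_add_right inner_diff_right)
    have wle: "\<And>i. i \<in> M \<Longrightarrow> a i \<bullet> w \<le> c i"
    proof -
      fix i assume iM: "i \<in> M"
      show "a i \<bullet> w \<le> c i"
      proof (cases "i \<in> U")
        case True
        then have dpos: "a i \<bullet> z - a i \<bullet> y > 0" unfolding U_def by simp
        have "s i0 * (a i \<bullet> z - a i \<bullet> y) \<le> s i * (a i \<bullet> z - a i \<bullet> y)"
          using i0(2)[OF True] dpos by (intro mult_right_mono) auto
        also have "\<dots> = c i - a i \<bullet> y" unfolding s_def using dpos by simp
        finally show ?thesis using winner[of i] by simp
      next
        case False
        then have "a i \<bullet> z - a i \<bullet> y \<le> 0" using iM unfolding U_def by simp
        then have "s i0 * (a i \<bullet> z - a i \<bullet> y) \<le> 0" using s0pos by (simp add: mult_nonneg_nonpos)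
        then show ?thesis using winner[of i] yle[OF iM] by simp
      qed
    qed
    have wB: "\<And>i. i \<in> B \<Longrightarrow> a i \<bullet> w = c i" using winner zB yB by simp
    have wi0: "a i0 \<bullet> w = c i0"
    proof -
      have dpos: "a i0 \<bullet> z - a i0 \<bullet> y > 0" using i0(1) unfolding U_def by simp
      then show ?thesis using winner[of i0] unfolding s_def by simp
    qed
    have wP: "w \<in> PE a c M J" using wle wB JB BM unfolding PE_def by auto
    have i0B: "i0 \<notin> B" using Ustrict[OF i0(1)] unfolding B_def tight_def by auto
    have "insert i0 B \<subseteq> tight w" using wB wi0 BM i0(1) unfolding tight_def U_def by auto
    then have "card (insert i0 B) \<le> card (tight w)" using finM unfolding tight_def by (simp add: card_mono)
    moreover have "card (insert i0 B) = Suc (card B)" using card_insert_disjoint[OF finite_subset[OF BM finM] i0B] .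
    ultimately show False using ymax[OF wP] unfolding B_def by simp
  qed
  then show ?thesis using JB BM yB by blast
qed

lemma minimal_face_conv:
  fixes a :: "nat \<Rightarrow> real^'n"
  assumes "J \<subseteq> B" "B \<subseteq> M" "\<exists>y. \<forall>i\<in>B. a i \<bullet> y = c i"
     "\<forall>z. (\<forall>i\<in>B. a i \<bullet> z = c i) \<longrightarrow> (\<forall>k\<in>M. a k \<bullet> z \<le> c k)"
  shows "PE a c M J \<noteq> {}"
  using assms unfolding PE_def by blast

definition ED :: "(real \<Rightarrow> bool) \<Rightarrow> bool" where
  "ED P \<longleftrightarrow> (\<forall>\<^sub>F e in at_right 0. P e) \<or> (\<forall>\<^sub>F e in at_right 0. \<not> P e)"

definition isP :: "(real \<Rightarrow> real) \<Rightarrow> bool" where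
  "isP f \<longleftrightarrow> (\<exists>p. \<forall>e. f e = poly p e)"

lemma isP_const: "isP (\<lambda>e. k)" unfolding isP_def by (rule exI[of _ "[:k:]"]) simp
lemma isP_pow: "isP (\<lambda>e. e ^ n)" unfolding isP_def by (rule exI[of _ "monom 1 n"]) (simp add: poly_monom)
lemma isP_add: "isP f \<Longrightarrow> isP g \<Longrightarrow> isP (\<lambda>e. f e + g e)"
  unfolding isP_def by (metis poly_add)
lemma isP_diff: "isP f \<Longrightarrow> isP g \<Longrightarrow> isP (\<lambda>e. f e - g e)"
  unfolding isP_def by (metis poly_diff)
lemma isP_smult: "isP f \<Longrightarrow> isP (\<lambda>e. k * f e)"
  unfolding isP_def by (metis poly_smult)
lemma isP_sum: "finite S \<Longrightarrow> (\<And>s. s \<in> S \<Longrightarrow> isP (f s)) \<Longrightarrow> isP (\<lambda>e. \<Sum>s\<in>S. f s e)"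
  by (induction S rule: finite_induct) (auto simp: isP_const intro: isP_add)

lemma poly_eventual_sign:
  fixes p :: "real poly"
  shows "(\<forall>\<^sub>F e in at_right 0. poly p e > 0) \<or> (\<forall>\<^sub>F e in at_right 0. poly p e < 0) \<or> p = 0"
proof (cases "p = 0")
  case True then show ?thesis by simp
next
  case False
  define R where "R = {r. poly p r = 0 \<and> r > 0}"
  have finR: "finite R" using poly_roots_finite[OF False] unfolding R_def by (rule finite_subset[rotated]) auto
  define \<delta> where "\<delta> = Min (insert 1 R)"
  have dpos: "\<delta> > 0" unfolding \<delta>_def using finR by (auto simp: R_def)
  have noroot: "\<And>e. 0 < e \<Longrightarrow> e < \<delta> \<Longrightarrow> poly p e \<noteq> 0"
  proof
    fix e assume "0 < e" "e < \<delta>" "poly p e = 0"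
    then have "e \<in> R" unfolding R_def by simp
    then have "\<delta> \<le> e" unfolding \<delta>_def using finR by simp
    then show False using \<open>e < \<delta>\<close> by simp
  qed
  define h where "h = \<delta> / 2"
  have h: "0 < h" "h < \<delta>" using dpos unfolding h_def by auto
  have same: "\<And>e. 0 < e \<Longrightarrow> e < \<delta> \<Longrightarrow> (poly p e > 0 \<longleftrightarrow> poly p h > 0)"
  proof -
    fix e assume e: "0 < e" "e < \<delta>"
    have ne: "poly p e \<noteq> 0" "poly p h \<noteq> 0" using noroot e h by auto
    show "(poly p e > 0 \<longleftrightarrow> poly p h > 0)"
    proof (rule ccontr)
      assume nsame: "\<not> ?thesis"
      have "\<exists>r. min e h < r \<and> r < max e h \<and> poly p r = 0"
      proof (cases "e < h")
        case True
        then show ?thesis using nsame ne poly_IVT_pos[of e h p] poly_IVT_neg[of e h p] by (auto simp: linorder_neq_iff)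
      next
        case False
        then have "h < e \<or> h = e" by auto
        then show ?thesis using nsame ne poly_IVT_pos[of h e p] poly_IVT_neg[of h e p] by (auto simp: linorder_neq_iff)
      qed
      then obtain r where "min e h < r" "r < max e h" "poly p r = 0" by blast
      then show False using noroot[of r] e h by auto
    qed
  qed
  have ev: "\<forall>\<^sub>F e in at_right 0. e < \<delta>" using dpos unfolding eventually_at_right_field by auto
  show ?thesis
  proof (cases "poly p h > 0")
    case True
    have "\<forall>\<^sub>F e in at_right 0. poly p e > 0"
      using dpos same True unfolding eventually_at_right_field by auto
    then show ?thesis by simp
  next
    case False
    have "\<forall>\<^sub>F e in at_right 0. poly p e < 0"
      using dpos same False noroot unfolding eventually_at_right_field by (metis linorder_neq_iff)
    then show ?thesis by simp
  qed
qed


lemma ED_const: "ED (\<lambda>e. Q)" unfolding ED_def by (cases Q) auto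

lemma ED_not: "ED P \<Longrightarrow> ED (\<lambda>e. \<not> P e)" unfolding ED_def by auto

lemma ED_conj: 
  assumes "ED P" "ED Q" shows "ED (\<lambda>e. P e \<and> Q e)"
proof -
  have "((\<forall>\<^sub>F e in at_right 0. P e) \<and> (\<forall>\<^sub>F e in at_right 0. Q e)) \<or> (\<forall>\<^sub>F e in at_right 0. \<not> P e) \<or> (\<forall>\<^sub>F e in at_right 0. \<not> Q e)"
    using assms unfolding ED_def by blast
  then show ?thesis
  proof (elim disjE conjE)
    assume a1: "\<forall>\<^sub>F e in at_right 0. P e" and a2: "\<forall>\<^sub>F e in at_right 0. Q e"
    have "\<forall>\<^sub>F e in at_right 0. P e \<and> Q e" by (rule eventually_conj[OF a1 a2])
    then show ?thesis unfolding ED_def by (rule disjI1)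
  next
    assume "\<forall>\<^sub>F e in at_right 0. \<not> P e"
    then have "\<forall>\<^sub>F e in at_right 0. \<not> (P e \<and> Q e)" by (rule eventually_mono) simp
    then show ?thesis unfolding ED_def by (rule disjI2)
  next
    assume "\<forall>\<^sub>F e in at_right 0. \<not> Q e"
    then have "\<forall>\<^sub>F e in at_right 0. \<not> (P e \<and> Q e)" by (rule eventually_mono) simp
    then show ?thesis unfolding ED_def by (rule disjI2)
  qed
qed

lemma ED_ball:
  assumes "finite S" "\<And>s. s \<in> S \<Longrightarrow> ED (P s)"
  shows "ED (\<lambda>e. \<forall>s\<in>S. P s e)"
proof (cases "\<exists>s\<in>S. \<forall>\<^sub>F e in at_right 0. \<not> P s e")
  case True
  then obtain s where s: "s \<in> S" "\<forall>\<^sub>F e in at_right 0. \<not> P s e" by blast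
  from s(2) have "\<forall>\<^sub>F e in at_right 0. \<not> (\<forall>s\<in>S. P s e)" by (rule eventually_mono) (use s(1) in blast)
  then show ?thesis unfolding ED_def by (rule disjI2)
next
  case False
  then have "\<forall>s\<in>S. \<forall>\<^sub>F e in at_right 0. P s e" using assms(2) unfolding ED_def by blast
  then have "\<forall>\<^sub>F e in at_right 0. \<forall>s\<in>S. P s e" by (rule eventually_ball_finite[OF assms(1)])
  then show ?thesis unfolding ED_def by (rule disjI1)
qed

lemma ED_bex:
  assumes "finite S" "\<And>s. s \<in> S \<Longrightarrow> ED (P s)"
  shows "ED (\<lambda>e. \<exists>s\<in>S. P s e)"
  using ED_not[OF ED_ball[OF assms(1), of "\<lambda>s e. \<not> P s e"]] assms(2) ED_not by simp

lemma ED_cong: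
  assumes "ED P" "\<And>e. e > 0 \<Longrightarrow> P e = Q e" shows "ED Q"
proof -
  have pos: "\<forall>\<^sub>F e in at_right (0::real). e > 0" by (rule eventually_at_right_less)
  from assms(1)[unfolded ED_def] show ?thesis
  proof (elim disjE)
    assume "\<forall>\<^sub>F e in at_right 0. P e"
    then have "\<forall>\<^sub>F e in at_right 0. Q e" using pos by eventually_elim (use assms(2) in auto)
    then show ?thesis unfolding ED_def by (rule disjI1)
  next
    assume "\<forall>\<^sub>F e in at_right 0. \<not> P e"
    then have "\<forall>\<^sub>F e in at_right 0. \<not> Q e" using pos by eventually_elim (use assms(2) in auto)
    then show ?thesis unfolding ED_def by (rule disjI2)
  qed
qed


lemma ED_le0:
  assumes "isP f" shows "ED (\<lambda>e. f e \<le> 0)"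
proof -
  obtain p where p: "\<And>e. f e = poly p e" using assms unfolding isP_def by blast
  have "(\<forall>\<^sub>F e in at_right 0. poly p e \<le> 0) \<or> (\<forall>\<^sub>F e in at_right 0. \<not> poly p e \<le> 0)"
    using poly_eventual_sign[of p]
  proof (elim disjE)
    assume "\<forall>\<^sub>F e in at_right 0. poly p e > 0"
    then have "\<forall>\<^sub>F e in at_right 0. \<not> poly p e \<le> 0" by (rule eventually_mono) simp
    then show ?thesis by (rule disjI2)
  next
    assume "\<forall>\<^sub>F e in at_right 0. poly p e < 0"
    then have "\<forall>\<^sub>F e in at_right 0. poly p e \<le> 0" by (rule eventually_mono) simp
    then show ?thesis by (rule disjI1)
  next
    assume "p = 0"
    then show ?thesis by simp
  qed
  then show ?thesis unfolding ED_def p .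
qed

lemma ED_eq0:
  assumes "isP f" shows "ED (\<lambda>e. f e = 0)"
proof -
  obtain p where p: "\<And>e. f e = poly p e" using assms unfolding isP_def by blast
  have "(\<forall>\<^sub>F e in at_right 0. poly p e = 0) \<or> (\<forall>\<^sub>F e in at_right 0. \<not> poly p e = 0)"
    using poly_eventual_sign[of p]
  proof (elim disjE)
    assume "\<forall>\<^sub>F e in at_right 0. poly p e > 0"
    then have "\<forall>\<^sub>F e in at_right 0. \<not> poly p e = 0" by (rule eventually_mono) simp
    then show ?thesis by (rule disjI2)
  next
    assume "\<forall>\<^sub>F e in at_right 0. poly p e < 0"
    then have "\<forall>\<^sub>F e in at_right 0. \<not> poly p e = 0" by (rule eventually_mono) simp
    then show ?thesis by (rule disjI2)
  next
    assume "p = 0"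
    then show ?thesis by simp
  qed
  then show ?thesis unfolding ED_def p .
qed



lemma dual_vectors:
  fixes B' :: "(real^'n) set"
  assumes ind: "independent B'"
  shows "\<exists>w. \<forall>u\<in>B'. \<forall>v\<in>B'. u \<bullet> w v = (if u = v then 1 else 0)"
proof -
  have "\<forall>v\<in>B'. \<exists>wv. \<forall>u\<in>B'. u \<bullet> wv = (if u = v then 1 else 0)"
  proof
    fix v assume vB: "v \<in> B'"
    obtain q r where q: "q \<in> span (B' - {v})" and r: "\<And>w. w \<in> span (B' - {v}) \<Longrightarrow> orthogonal r w"
      and vqr: "v = q + r"
      using orthogonal_subspace_decomp_exists[of "B' - {v}" v] by blast
    have "v \<notin> span (B' - {v})" using ind vB dependent_def by blast
    then have rne: "r \<noteq> 0" using q vqr by auto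
    have rr: "r \<bullet> r > 0" using rne by simp
    have rq: "r \<bullet> q = 0" using r[OF q] unfolding orthogonal_def .
    have "v \<bullet> r = q \<bullet> r + r \<bullet> r" using vqr by (simp add: inner_add_left)
    also have "q \<bullet> r = 0" using rq by (simp add: inner_commute)
    finally have vr: "v \<bullet> r = r \<bullet> r" by simp
    show "\<exists>wv. \<forall>u\<in>B'. u \<bullet> wv = (if u = v then 1 else 0)"
    proof (intro exI[of _ "(1 / (r \<bullet> r)) *\<^sub>R r"] ballI)
      fix u assume uB: "u \<in> B'"
      show "u \<bullet> ((1 / (r \<bullet> r)) *\<^sub>R r) = (if u = v then 1 else 0)"
      proof (cases "u = v")
        case True then show ?thesis using vr rr by simp
      next
        case False
        then have "u \<in> span (B' - {v})" using uB by (simp add: span_base)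
        then have "r \<bullet> u = 0" using r unfolding orthogonal_def by blast
        then show ?thesis using False by (simp add: inner_commute)
      qed
    qed
  qed
  then show ?thesis by metis
qed

lemma face_char:
  fixes a :: "nat \<Rightarrow> real^'n"
  assumes finM: "finite M" and BM: "B \<subseteq> M"
  obtains st V \<iota> \<mu> where
    "finite (V :: (real^'n) set)"
    "\<And>c. ((\<exists>y. \<forall>i\<in>B. a i \<bullet> y = c i) \<and> (\<forall>z. (\<forall>i\<in>B. a i \<bullet> z = c i) \<longrightarrow> (\<forall>k\<in>M. a k \<bullet> z \<le> c k)))
      \<longleftrightarrow> st \<and> (\<forall>i\<in>B. (\<Sum>v\<in>V. \<mu> i v * c (\<iota> v)) = c i) \<and> (\<forall>k\<in>M. (\<Sum>v\<in>V. \<mu> k v * c (\<iota> v)) \<le> c k)"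
proof -
  obtain V where V: "V \<subseteq> a ` B" "independent V" "a ` B \<subseteq> span V"
    using maximal_independent_subset[of "a ` B"] by blast
  have finV: "finite V" using V(2) by (rule independent_imp_finite)
  obtain w where w: "\<And>u v. u \<in> V \<Longrightarrow> v \<in> V \<Longrightarrow> u \<bullet> w v = (if u = v then 1 else 0)"
    using dual_vectors[OF V(2)] by blast
  define \<iota> where "\<iota> = inv_into B a"
  have \<iota>: "\<And>v. v \<in> V \<Longrightarrow> \<iota> v \<in> B \<and> a (\<iota> v) = v"
    using V(1) unfolding \<iota>_def by (auto intro: inv_into_into f_inv_into_f)
  define \<mu> where "\<mu> k = (SOME u. (\<Sum>v\<in>V. u v *\<^sub>R v) = a k)" for k
  have \<mu>: "\<And>k. a k \<in> span V \<Longrightarrow> (\<Sum>v\<in>V. \<mu> k v *\<^sub>R v) = a k"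
  proof -
    fix k assume "a k \<in> span V"
    then have "\<exists>u. (\<Sum>v\<in>V. u v *\<^sub>R v) = a k" using span_finite[OF finV] by auto
    then show "(\<Sum>v\<in>V. \<mu> k v *\<^sub>R v) = a k" unfolding \<mu>_def by (rule someI_ex)
  qed
  define st where "st = (\<forall>k\<in>M. a k \<in> span V)"
  have inB: "\<And>i. i \<in> B \<Longrightarrow> a i \<in> span V" using V(3) by auto
  have A: "\<And>k c z. a k \<in> span V \<Longrightarrow> (\<forall>u\<in>V. u \<bullet> z = c (\<iota> u)) \<Longrightarrow> a k \<bullet> z = (\<Sum>v\<in>V. \<mu> k v * c (\<iota> v))"
  proof -
    fix k c z assume k: "a k \<in> span V" and z: "\<forall>u\<in>V. u \<bullet> z = c (\<iota> u)"
    have "a k \<bullet> z = (\<Sum>v\<in>V. \<mu> k v *\<^sub>R v) \<bullet> z" using \<mu>[OF k] by simp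
    also have "\<dots> = (\<Sum>v\<in>V. \<mu> k v * (v \<bullet> z))" by (simp add: inner_sum_left)
    also have "\<dots> = (\<Sum>v\<in>V. \<mu> k v * c (\<iota> v))" using z by simp
    finally show "a k \<bullet> z = (\<Sum>v\<in>V. \<mu> k v * c (\<iota> v))" .
  qed
  have Bsol: "\<And>c. \<forall>u\<in>V. u \<bullet> (\<Sum>v\<in>V. c (\<iota> v) *\<^sub>R w v) = c (\<iota> u)"
  proof
    fix c u assume u: "u \<in> V"
    have "u \<bullet> (\<Sum>v\<in>V. c (\<iota> v) *\<^sub>R w v) = (\<Sum>v\<in>V. c (\<iota> v) * (u \<bullet> w v))"
      by (simp add: inner_sum_right)
    also have "\<dots> = (\<Sum>v\<in>V. if v = u then c (\<iota> v) else 0)"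
      using w u by (intro sum.cong) auto
    also have "\<dots> = c (\<iota> u)" using u finV by simp
    finally show "u \<bullet> (\<Sum>v\<in>V. c (\<iota> v) *\<^sub>R w v) = c (\<iota> u)" .
  qed
  have C: "\<And>c z. \<forall>i\<in>B. a i \<bullet> z = c i \<Longrightarrow> \<forall>u\<in>V. u \<bullet> z = c (\<iota> u)"
    using \<iota> by metis
  have "((\<exists>y. \<forall>i\<in>B. a i \<bullet> y = c i) \<and> (\<forall>z. (\<forall>i\<in>B. a i \<bullet> z = c i) \<longrightarrow> (\<forall>k\<in>M. a k \<bullet> z \<le> c k)))
      \<longleftrightarrow> st \<and> (\<forall>i\<in>B. (\<Sum>v\<in>V. \<mu> i v * c (\<iota> v)) = c i) \<and> (\<forall>k\<in>M. (\<Sum>v\<in>V. \<mu> k v * c (\<iota> v)) \<le> c k)" for c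
  proof
    assume R: "st \<and> (\<forall>i\<in>B. (\<Sum>v\<in>V. \<mu> i v * c (\<iota> v)) = c i) \<and> (\<forall>k\<in>M. (\<Sum>v\<in>V. \<mu> k v * c (\<iota> v)) \<le> c k)"
    define y where "y = (\<Sum>v\<in>V. c (\<iota> v) *\<^sub>R w v)"
    have "\<forall>i\<in>B. a i \<bullet> y = c i"
      using A[OF inB Bsol[of c]] R unfolding y_def by auto
    moreover have "\<forall>z. (\<forall>i\<in>B. a i \<bullet> z = c i) \<longrightarrow> (\<forall>k\<in>M. a k \<bullet> z \<le> c k)"
    proof (intro allI impI ballI)
      fix z k assume z: "\<forall>i\<in>B. a i \<bullet> z = c i" and k: "k \<in> M"
      have "a k \<in> span V" using R k unfolding st_def by auto
      then show "a k \<bullet> z \<le> c k" using A[OF _ C[OF z]] R k by auto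
    qed
    ultimately show "(\<exists>y. \<forall>i\<in>B. a i \<bullet> y = c i) \<and> (\<forall>z. (\<forall>i\<in>B. a i \<bullet> z = c i) \<longrightarrow> (\<forall>k\<in>M. a k \<bullet> z \<le> c k))"
      by blast
  next
    assume L: "(\<exists>y. \<forall>i\<in>B. a i \<bullet> y = c i) \<and> (\<forall>z. (\<forall>i\<in>B. a i \<bullet> z = c i) \<longrightarrow> (\<forall>k\<in>M. a k \<bullet> z \<le> c k))"
    then obtain y where y: "\<forall>i\<in>B. a i \<bullet> y = c i" by blast
    have all: "\<And>z. \<forall>i\<in>B. a i \<bullet> z = c i \<Longrightarrow> \<forall>k\<in>M. a k \<bullet> z \<le> c k" using L by blast
    have stt: st unfolding st_def
    proof (rule ballI, rule ccontr)
      fix k assume kM: "k \<in> M" and nk: "a k \<notin> span V"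
      obtain q r where q: "q \<in> span V" and r: "\<And>w. w \<in> span V \<Longrightarrow> orthogonal r w"
        and kqr: "a k = q + r"
        using orthogonal_subspace_decomp_exists[of V "a k"] by blast
      have rne: "r \<noteq> 0" using q kqr nk by auto
      have rr: "r \<bullet> r > 0" using rne by simp
      have "a k \<bullet> r = q \<bullet> r + r \<bullet> r" using kqr by (simp add: inner_add_left)
      also have "q \<bullet> r = 0" using r[OF q] by (simp add: orthogonal_def inner_commute)
      finally have kr: "a k \<bullet> r = r \<bullet> r" by simp
      define t where "t = (\<bar>c k - a k \<bullet> y\<bar> + 1) / (r \<bullet> r)"
      define z where "z = y + t *\<^sub>R r"
      have "\<forall>i\<in>B. a i \<bullet> z = c i"
      proof
        fix i assume i: "i \<in> B"
        have "r \<bullet> a i = 0" using r[OF inB[OF i]] unfolding orthogonal_def .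
        then show "a i \<bullet> z = c i" using y i unfolding z_def by (simp add: inner_add_right inner_commute)
      qed
      then have "a k \<bullet> z \<le> c k" using all kM by blast
      moreover have "a k \<bullet> z = a k \<bullet> y + (\<bar>c k - a k \<bullet> y\<bar> + 1)"
        unfolding z_def t_def using kr rr by (simp add: inner_add_right)
      ultimately show False by linarith
    qed
    have "\<forall>i\<in>B. (\<Sum>v\<in>V. \<mu> i v * c (\<iota> v)) = c i"
      using A[OF inB C[OF y]] y by auto
    moreover have "\<forall>k\<in>M. (\<Sum>v\<in>V. \<mu> k v * c (\<iota> v)) \<le> c k"
    proof
      fix k assume k: "k \<in> M"
      have "a k \<in> span V" using stt k unfolding st_def by auto
      then show "(\<Sum>v\<in>V. \<mu> k v * c (\<iota> v)) \<le> c k" using A[OF _ C[OF y]] all[OF y] k by auto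
    qed
    ultimately show "st \<and> (\<forall>i\<in>B. (\<Sum>v\<in>V. \<mu> i v * c (\<iota> v)) = c i) \<and> (\<forall>k\<in>M. (\<Sum>v\<in>V. \<mu> k v * c (\<iota> v)) \<le> c k)"
      using stt by blast
  qed
  then show ?thesis using that[OF finV] by blast
qed



lemma ED_face:
  fixes a :: "nat \<Rightarrow> real^'n"
  assumes finM: "finite M" and BM: "B \<subseteq> M"
  shows "ED (\<lambda>e. (\<exists>y. \<forall>i\<in>B. a i \<bullet> y = beps b e i) \<and>
     (\<forall>z. (\<forall>i\<in>B. a i \<bullet> z = beps b e i) \<longrightarrow> (\<forall>k\<in>M. a k \<bullet> z \<le> beps b e k)))"
proof -
  obtain V st \<mu> \<iota> where V: "finite (V :: (real^'n) set)"
    and ch: "\<And>c. ((\<exists>y. \<forall>i\<in>B. a i \<bullet> y = c i) \<and> (\<forall>z. (\<forall>i\<in>B. a i \<bullet> z = c i) \<longrightarrow> (\<forall>k\<in>M. a k \<bullet> z \<le> c k)))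
      \<longleftrightarrow> st \<and> (\<forall>i\<in>B. (\<Sum>v\<in>V. \<mu> i v * c (\<iota> v)) = c i) \<and> (\<forall>k\<in>M. (\<Sum>v\<in>V. \<mu> k v * c (\<iota> v)) \<le> c k)"
    by (rule face_char[OF finM BM, of a]) (rule that)
  have P: "\<And>k. isP (\<lambda>e. (\<Sum>v\<in>V. \<mu> k v * beps b e (\<iota> v)) - beps b e k)"
    unfolding beps_def
    by (intro isP_diff isP_sum[OF V] isP_smult isP_add isP_const isP_pow)
  have ED1: "ED (\<lambda>e. st \<and> (\<forall>i\<in>B. (\<Sum>v\<in>V. \<mu> i v * beps b e (\<iota> v)) - beps b e i = 0) \<and>
                   (\<forall>k\<in>M. (\<Sum>v\<in>V. \<mu> k v * beps b e (\<iota> v)) - beps b e k \<le> 0))"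
    using finM BM finite_subset
    by (intro ED_conj ED_const ED_ball ED_eq0 ED_le0 P) auto
  show ?thesis
    by (rule ED_cong[OF ED1]) (simp add: ch)
qed

lemma ED_feas:
  fixes a :: "nat \<Rightarrow> real^'n"
  assumes finM: "finite M" and JM: "J \<subseteq> M"
  shows "ED (\<lambda>e. PE a (beps b e) M J \<noteq> {})"
proof -
  define \<Phi> where "\<Phi> B e \<longleftrightarrow> (\<exists>y. \<forall>i\<in>B. a i \<bullet> y = beps b e i) \<and>
     (\<forall>z. (\<forall>i\<in>B. a i \<bullet> z = beps b e i) \<longrightarrow> (\<forall>k\<in>M. a k \<bullet> z \<le> beps b e k))" for B e
  have finB: "finite {B. J \<subseteq> B \<and> B \<subseteq> M}" by (rule finite_subset[of _ "Pow M"]) (auto simp: finM)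
  have ED1: "ED (\<lambda>e. \<exists>B\<in>{B. J \<subseteq> B \<and> B \<subseteq> M}. \<Phi> B e)"
  proof (rule ED_bex[OF finB])
    fix B assume "B \<in> {B. J \<subseteq> B \<and> B \<subseteq> M}"
    then have "B \<subseteq> M" by simp
    then show "ED (\<Phi> B)" unfolding \<Phi>_def by (rule ED_face[OF finM])
  qed
  have eq: "(\<exists>B\<in>{B. J \<subseteq> B \<and> B \<subseteq> M}. \<Phi> B e) = (PE a (beps b e) M J \<noteq> {})" for e
  proof
    assume "\<exists>B\<in>{B. J \<subseteq> B \<and> B \<subseteq> M}. \<Phi> B e"
    then obtain B where B: "J \<subseteq> B" "B \<subseteq> M" "\<Phi> B e" by auto
    show "PE a (beps b e) M J \<noteq> {}"
      by (rule minimal_face_conv[OF B(1,2)]) (use B(3) in \<open>auto simp: \<Phi>_def\<close>)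
  next
    assume "PE a (beps b e) M J \<noteq> {}"
    from minimal_face[OF finM JM this] have "\<exists>B. J \<subseteq> B \<and> B \<subseteq> M \<and> \<Phi> B e"
      unfolding \<Phi>_def .
    then obtain B where B: "J \<subseteq> B \<and> B \<subseteq> M \<and> \<Phi> B e" by (rule exE)
    then show "\<exists>B\<in>{B. J \<subseteq> B \<and> B \<subseteq> M}. \<Phi> B e" using B by auto
  qed
  show ?thesis by (rule ED_cong[OF ED1]) (rule eq)
qed

lemma famF_eq:
  fixes a :: "nat \<Rightarrow> real^'n"
  shows "famF a b m e = {J. J \<subseteq> {1..m} \<and> J \<noteq> {} \<and> PE a (beps b e) {1..m} J \<noteq> {}}"
proof -
  have "\<And>J. J \<noteq> {} \<Longrightarrow> (\<Inter>i\<in>J. Feps a b m e i) = PE a (beps b e) {1..m} J"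
    unfolding Feps_def bdHeps_def Keps_def Heps_def PE_def by auto
  then show ?thesis unfolding famF_def
  proof (intro Collect_cong)
    fix J
    assume h: "\<And>J. J \<noteq> {} \<Longrightarrow> (\<Inter>i\<in>J. Feps a b m e i) = PE a (beps b e) {1..m} J"
    show "(J \<subseteq> {1..m} \<and> J \<noteq> {} \<and> (\<Inter>i\<in>J. Feps a b m e i) \<noteq> {}) = (J \<subseteq> {1..m} \<and> J \<noteq> {} \<and> PE a (beps b e) {1..m} J \<noteq> {})"
    proof (cases "J = {}")
      case False
      show ?thesis unfolding h[OF False] by (rule refl)
    qed simp
  qed
qed

lemma famF0_eq:
  fixes a :: "nat \<Rightarrow> real^'n" and b :: "nat \<Rightarrow> real" and m :: nat
  defines "F0 \<equiv> {J. J \<subseteq> {1..m} \<and> J \<noteq> {} \<and> (\<forall>\<^sub>F e in at_right 0. PE a (beps b e) {1..m} J \<noteq> {})}"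
  shows "\<forall>\<^sub>F e in at_right 0. famF a b m e = F0" and "famF0 a b m = F0"
proof -
  have each: "\<forall>J\<in>Pow {1..m}. \<forall>\<^sub>F e in at_right 0.
      (PE a (beps b e) {1..m} J \<noteq> {}) = (\<forall>\<^sub>F e in at_right 0. PE a (beps b e) {1..m} J \<noteq> {})"
  proof
    fix J assume "J \<in> Pow {1..m}"
    then have "ED (\<lambda>e. PE a (beps b e) {1..m} J \<noteq> {})" by (intro ED_feas) auto
    then show "\<forall>\<^sub>F e in at_right 0.
      (PE a (beps b e) {1..m} J \<noteq> {}) = (\<forall>\<^sub>F e in at_right 0. PE a (beps b e) {1..m} J \<noteq> {})"
      unfolding ED_def
    proof (elim disjE)
      assume h: "\<forall>\<^sub>F e in at_right 0. PE a (beps b e) {1..m} J \<noteq> {}"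
      show ?thesis by (rule eventually_mono[OF h]) (rule iffI; (assumption | rule h))
    next
      assume h: "\<forall>\<^sub>F e in at_right 0. \<not> PE a (beps b e) {1..m} J \<noteq> {}"
      have "\<not> (\<forall>\<^sub>F e in at_right 0. PE a (beps b e) {1..m} J \<noteq> {})"
      proof
        assume "\<forall>\<^sub>F e in at_right 0. PE a (beps b e) {1..m} J \<noteq> {}"
        then have "\<forall>\<^sub>F e in at_right (0::real). False" using h by eventually_elim simp
        then show False by simp
      qed
      then show ?thesis using h by (rule_tac eventually_mono[OF h]) simp
    qed
  qed
  have "\<forall>\<^sub>F e in at_right 0. \<forall>J\<in>Pow {1..m}.
      (PE a (beps b e) {1..m} J \<noteq> {}) = (\<forall>\<^sub>F e in at_right 0. PE a (beps b e) {1..m} J \<noteq> {})"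
    by (rule eventually_ball_finite) (use each in auto)
  then show ev: "\<forall>\<^sub>F e in at_right 0. famF a b m e = F0"
    by (rule eventually_mono) (auto simp: famF_eq F0_def)
  show "famF0 a b m = F0"
    unfolding famF0_def
  proof (rule the_equality)
    show "\<forall>\<^sub>F e in at_right 0. famF a b m e = F0" by (rule ev)
    fix F' assume "\<forall>\<^sub>F e in at_right 0. famF a b m e = F'"
    then have "\<forall>\<^sub>F e in at_right (0::real). F' = F0" using ev by eventually_elim simp
    then show "F' = F0" by (simp add: eventually_const_iff)
  qed
qed



theorem theorem1:
  fixes a :: "nat \<Rightarrow> real^'n" and b :: "nat \<Rightarrow> real" and m :: nat
  assumes "m \<ge> 1"
    and "\<forall>i\<in>{1..m}. a i \<noteq> 0"
    and "{x :: real^'n. \<forall>i\<in>{1..m}. a i \<bullet> x \<le> b i} \<noteq> {}"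
  shows "\<forall>x :: real^'n. indicator (\<Union>i\<in>{1..m}. Hc a b i) x =
           (\<Sum>J\<in>famF0 a b m. (-1::real) ^ (card J - 1) * indicator (\<Inter>i\<in>J. Hc a b i) x)"
proof
  fix x :: "real^'n"
  define M where "M = {1..m}"
  have finM: "finite M" unfolding M_def by simp
  define F0 where "F0 = {J. J \<subseteq> {1..m} \<and> J \<noteq> {} \<and> (\<forall>\<^sub>F e in at_right 0. PE a (beps b e) {1..m} J \<noteq> {})}"
  have evF: "\<forall>\<^sub>F e in at_right 0. famF a b m e = F0" and F0: "famF0 a b m = F0"
    using famF0_eq[of a b m] unfolding F0_def by auto
  define V where "V = {i\<in>M. a i \<bullet> x > b i}"
  have evV: "\<forall>\<^sub>F e in at_right 0. \<forall>i\<in>M. (a i \<bullet> x > beps b e i \<longleftrightarrow> a i \<bullet> x > b i)"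
  proof (rule eventually_ball_finite[OF finM], rule ballI)
    fix i assume i: "i \<in> M"
    then have i1: "i \<ge> 1" unfolding M_def by simp
    show "\<forall>\<^sub>F e in at_right 0. (a i \<bullet> x > beps b e i \<longleftrightarrow> a i \<bullet> x > b i)"
    proof (cases "a i \<bullet> x > b i")
      case True
      have "((\<lambda>e::real. e ^ i) \<longlongrightarrow> 0 ^ i) (at_right 0)"
        by (intro tendsto_intros)
      then have "((\<lambda>e::real. e ^ i) \<longlongrightarrow> 0) (at_right 0)" using i1 by simp
      then have "\<forall>\<^sub>F e in at_right 0. e ^ i < a i \<bullet> x - b i"
        using True by (intro order_tendstoD(2)) auto
      then show ?thesis by (rule eventually_mono) (simp add: beps_def True)
    next
      case False
      have "\<forall>\<^sub>F e in at_right (0::real). e > 0" by (rule eventually_at_right_less)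
      then show ?thesis
      proof (rule eventually_mono)
        fix e :: real assume "e > 0"
        then have "e ^ i > 0" by simp
        then show "(a i \<bullet> x > beps b e i \<longleftrightarrow> a i \<bullet> x > b i)" using False by (simp add: beps_def)
      qed
    qed
  qed
  have "\<forall>\<^sub>F e in at_right (0::real). e > 0 \<and> famF a b m e = F0 \<and> (\<forall>i\<in>M. (a i \<bullet> x > beps b e i \<longleftrightarrow> a i \<bullet> x > b i))"
    using eventually_at_right_less evF evV by (intro eventually_conj) auto
  then obtain e where e: "e > 0" "famF a b m e = F0" "\<forall>i\<in>M. (a i \<bullet> x > beps b e i \<longleftrightarrow> a i \<bullet> x > b i)"
    using eventually_happens'[of "at_right (0::real)"] by force
  define c where "c = beps b e"
  have Ve: "{i\<in>M. a i \<bullet> x > c i} = V" using e(3) unfolding V_def c_def by auto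
  have F0e: "F0 = {J. J \<subseteq> M \<and> J \<noteq> {} \<and> PE a c M J \<noteq> {}}"
    using e(2) famF_eq[of a b m e] unfolding M_def c_def by simp
  have PEne: "PE a c M {} \<noteq> {}"
  proof -
    obtain x0 where x0: "\<forall>i\<in>{1..m}. a i \<bullet> x0 \<le> b i" using assms(3) by blast
    have "x0 \<in> PE a c M {}"
      unfolding PE_def c_def beps_def M_def using x0 e(1)
      by (auto intro: order_trans[OF _ less_imp_le[OF less_add_same_cancel1[THEN iffD2]]])
    then show ?thesis by blast
  qed
  have finF0: "finite F0" unfolding F0e by (rule finite_subset[of _ "Pow M"]) (auto simp: finM)
  have ind: "\<And>J. J \<in> F0 \<Longrightarrow> indicator (\<Inter>i\<in>J. Hc a b i) x = (if J \<subseteq> V then 1 else 0 :: real)"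
    unfolding F0e V_def Hc_def by (auto simp: indicator_def)
  have "(\<Sum>J\<in>famF0 a b m. (-1::real) ^ (card J - 1) * indicator (\<Inter>i\<in>J. Hc a b i) x)
      = (\<Sum>J\<in>F0. if J \<subseteq> V then (-1::real) ^ (card J - 1) else 0)"
    unfolding F0 by (intro sum.cong) (auto simp: ind)
  also have "\<dots> = (\<Sum>J\<in>{J\<in>F0. J \<subseteq> V}. (-1::real) ^ (card J - 1))"
    by (rule sum.inter_filter[OF finF0, symmetric])
  also have "{J\<in>F0. J \<subseteq> V} = {J\<in>Pow V. J \<noteq> {} \<and> PE a c M ({} \<union> J) \<noteq> {}}"
    unfolding F0e V_def by auto
  also have "(\<Sum>J\<in>{J\<in>Pow V. J \<noteq> {} \<and> PE a c M ({} \<union> J) \<noteq> {}}. (-1::real) ^ (card J - 1))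
      = sumF (\<lambda>J. PE a c M ({} \<union> J) \<noteq> {}) V"
    unfolding sumF_def gT_def
  proof (rule sum.inter_filter)
    show "finite (Pow V)" using finM unfolding V_def by simp
  qed
  finally have RHS: "(\<Sum>J\<in>famF0 a b m. (-1::real) ^ (card J - 1) * indicator (\<Inter>i\<in>J. Hc a b i) x)
      = sumF (\<lambda>J. PE a c M ({} \<union> J) \<noteq> {}) V" .
  show "indicator (\<Union>i\<in>{1..m}. Hc a b i) x =
           (\<Sum>J\<in>famF0 a b m. (-1::real) ^ (card J - 1) * indicator (\<Inter>i\<in>J. Hc a b i) x)"
  proof (cases "V = {}")
    case True
    then have "x \<notin> (\<Union>i\<in>{1..m}. Hc a b i)" unfolding V_def M_def Hc_def by auto
    moreover have "sumF (\<lambda>J. PE a c M ({} \<union> J) \<noteq> {}) V = 0" using True by (simp add: sumF_empty)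
    ultimately show ?thesis using RHS by simp
  next
    case False
    then have "x \<in> (\<Union>i\<in>{1..m}. Hc a b i)" unfolding V_def M_def Hc_def by auto
    moreover have "sumF (\<lambda>J. PE a c M ({} \<union> J) \<noteq> {}) V = 1"
      using G_main[OF finM refl, of "{}" a c x "{}"] PEne False Ve by simp
    ultimately show ?thesis using RHS by simp
  qed
qed

end
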